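(* Let $T:\mathbb{Z}\to\mathbb{Z}$ be defined by $T(n)=n/2$ if $n$ is even and $T(n)=(3n+1)/2$ if $n$ is odd, and let $[2]_3$ be the set of integers congruent to $2\pmod 3$. Define $T^*:[2]_3\to\mathbb{Z}$ by $$T^*(n)=\begin{cases} T(n)=\frac{3n+1}{2}, & n\equiv -1\pmod 6,\\ T^2(n)=\frac{3n+2}{4}, & n\equiv 2\pmod{12},\\ T^3(n)=\frac{3n+4}{8}, & n\equiv -4\pmod{24},\\ T^4(n)=\frac{3n+8}{16}, & n\equiv 8\pmod{48},\\ T^5(n)=\frac{3n+16}{32}, & n\equiv -16\pmod{96},\\ T^6(n)=\frac{3n+32}{64}, & n\equiv 32\pmod{192},\\ T^6(n)=\frac{n}{64}, & n\equiv -64\pmod{192}.\end{cases}$$ Then (i) the range of $T^*$ is exactly $[2]_3$; and (ii) for every $n\in[2]_3$, the $T^*$-trajectory $((T^* )^k(n))_{k\ge 0}$ consists of finitely many numbers congruent to $5\pmod 9$ followed only by numbers congruent to $2$ or $8\pmod 9$.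
   Context: The seven residue classes in the definition partition $[2]_3$. $T^k$ and $(T^* )^k$ denote $k$-fold iterates, with the $0$-th iterate the identity. *)

theory Defs
  imports Main
begin

definition T :: "int \<Rightarrow> int" where
  "T n = (if even n then n div 2 else (3 * n + 1) div 2)"

definition cls23 :: "int set" where
  "cls23 = {n. n mod 3 = 2}"

text \<open>The accelerated map T* on [2]_3 (its value outside [2]_3 is irrelevant;
  we set it to n). The seven residue classes partition [2]_3.\<close>
definition Tstar :: "int \<Rightarrow> int" where
  "Tstar n =
     (if n mod 6 = 5 then T n
      else if n mod 12 = 2 then (T ^^ 2) n
      else if n mod 24 = 20 then (T ^^ 3) n
      else if n mod 48 = 8 then (T ^^ 4) n
      else if n mod 96 = 80 then (T ^^ 5) n
      else if n mod 192 = 32 then (T ^^ 6) n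
      else if n mod 192 = 128 then (T ^^ 6) n
      else n)"

end

theory Submission imports Defs begin

lemma Tev: "T (2*m) = m" unfolding T_def by simp
lemma Tod: "T (2*m+1) = 3*m+2" unfolding T_def by simp

lemma f2: "(T^^2) n = T (T n)" by (simp add: numeral_eq_Suc)
lemma f3: "(T^^3) n = T (T (T n))" by (simp add: numeral_eq_Suc)
lemma f4: "(T^^4) n = T (T (T (T n)))" by (simp add: numeral_eq_Suc)
lemma f5: "(T^^5) n = T (T (T (T (T n))))" by (simp add: numeral_eq_Suc)
lemma f6: "(T^^6) n = T (T (T (T (T (T n)))))" by (simp add: numeral_eq_Suc)

lemma c1: assumes "n = 6*m+5" shows "T n = 9*m+8"
  using Tod[of "3*m+2"] assms by (simp add: algebra_simps)
lemma c2: assumes "n = 12*m+2" shows "(T^^2) n = 9*m+2"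
  using Tev[of "6*m+1"] Tod[of "3*m"] assms by (simp add: f2 algebra_simps)
lemma c3: assumes "n = 24*m+20" shows "(T^^3) n = 9*m+8"
  using Tev[of "12*m+10"] Tev[of "6*m+5"] c1[of "6*m+5" m] assms by (simp add: f3 algebra_simps)
lemma c4: assumes "n = 48*m+8" shows "(T^^4) n = 9*m+2"
  using Tev[of "24*m+4"] Tev[of "12*m+2"] c2[of "12*m+2" m] assms by (simp add: f4 f2 algebra_simps)
lemma c5: assumes "n = 96*m+80" shows "(T^^5) n = 9*m+8"
  using Tev[of "48*m+40"] Tev[of "24*m+20"] c3[of "24*m+20" m] assms by (simp add: f5 f3 algebra_simps)
lemma c6: assumes "n = 192*m+32" shows "(T^^6) n = 9*m+2"
  using Tev[of "96*m+16"] Tev[of "48*m+8"] c4[of "48*m+8" m] assms by (simp add: f6 f4 algebra_simps)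
lemma c7: assumes "n = 192*m+128" shows "(T^^6) n = 3*m+2"
  using Tev[of "96*m+64"] Tev[of "48*m+32"] Tev[of "24*m+16"] Tev[of "12*m+8"] Tev[of "6*m+4"] Tev[of "3*m+2"] assms
  by (simp add: f6 algebra_simps)

lemma decomp: "n = k * (n div k) + n mod k" for n k :: int by simp

lemma enum: "\<forall>r\<in>{0..191::int}. r mod 3 = 2 \<longrightarrow> (r mod 6 = 5 \<or> r mod 12 = 2 \<or> r mod 24 = 20 \<or> r mod 48 = 8 \<or> r mod 96 = 80
     \<or> r = 32 \<or> r = 128)"
  unfolding set_upto[symmetric] by (simp add: upto.simps)

lemma mm: "b dvd a \<Longrightarrow> n mod b = (n mod a) mod (b::int)" by (simp add: mod_mod_cancel)

lemma mmh: "n mod a = c \<Longrightarrow> b dvd a \<Longrightarrow> n mod b = c mod (b::int)"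
  using mm[of b a n] by simp

lemma cases23:
  assumes "n mod 3 = (2::int)"
  shows "(n mod 6 = 5 \<and> Tstar n = 9*(n div 6)+8) \<or>
         (n mod 12 = 2 \<and> Tstar n = 9*(n div 12)+2) \<or>
         (n mod 24 = 20 \<and> Tstar n = 9*(n div 24)+8) \<or>
         (n mod 48 = 8 \<and> Tstar n = 9*(n div 48)+2) \<or>
         (n mod 96 = 80 \<and> Tstar n = 9*(n div 96)+8) \<or>
         (n mod 192 = 32 \<and> Tstar n = 9*(n div 192)+2) \<or>
         (n mod 192 = 128 \<and> Tstar n = 3*(n div 192)+2)"
proof -
  define r where "r = n mod 192"
  have r: "r \<in> {0..191}" unfolding r_def by simp
  have r192: "n mod 192 = r" unfolding r_def by simp
  have "r mod 3 = 2" using assms mmh[OF r192, of 3] by simp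
  then have "r mod 6 = 5 \<or> r mod 12 = 2 \<or> r mod 24 = 20 \<or> r mod 48 = 8 \<or> r mod 96 = 80
     \<or> r = 32 \<or> r = 128" using enum r by blast
  moreover have e6: "n mod 6 = r mod 6" using mmh[OF r192, of 6] by simp
  moreover have e12: "n mod 12 = r mod 12" using mmh[OF r192, of 12] by simp
  moreover have e24: "n mod 24 = r mod 24" using mmh[OF r192, of 24] by simp
  moreover have e48: "n mod 48 = r mod 48" using mmh[OF r192, of 48] by simp
  moreover have e96: "n mod 96 = r mod 96" using mmh[OF r192, of 96] by simp
  ultimately have "n mod 6 = 5 \<or> n mod 12 = 2 \<or> n mod 24 = 20 \<or> n mod 48 = 8 \<or> n mod 96 = 80
     \<or> n mod 192 = 32 \<or> n mod 192 = 128"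
    using r192 by (simp only:)
  then show ?thesis
  proof (elim disjE)
    assume h: "n mod 6 = 5"
    then have "Tstar n = T n" unfolding Tstar_def by (simp only: if_True simp_thms(6))
    also have "\<dots> = 9*(n div 6)+8" using c1[OF decomp[of n 6, unfolded h]] by (simp only:)
    finally show ?thesis using h by blast
  next
    assume h: "n mod 12 = 2"
    moreover have "n mod 6 \<noteq> 5" using mmh[OF h, of 6] by simp_all
    ultimately have "Tstar n = (T^^2) n" unfolding Tstar_def by (simp only: if_True if_False simp_thms(6))
    also have "\<dots> = 9*(n div 12)+2" using c2[OF decomp[of n 12, unfolded h]] by (simp only:)
    finally show ?thesis using h by blast
  next
    assume h: "n mod 24 = 20"
    moreover have "n mod 6 \<noteq> 5" "n mod 12 \<noteq> 2" using mmh[OF h, of 6] mmh[OF h, of 12] by simp_all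
    ultimately have "Tstar n = (T^^3) n" unfolding Tstar_def by (simp only: if_True if_False simp_thms(6))
    also have "\<dots> = 9*(n div 24)+8" using c3[OF decomp[of n 24, unfolded h]] by (simp only:)
    finally show ?thesis using h by blast
  next
    assume h: "n mod 48 = 8"
    moreover have "n mod 6 \<noteq> 5" "n mod 12 \<noteq> 2" "n mod 24 \<noteq> 20"
      using mmh[OF h, of 6] mmh[OF h, of 12] mmh[OF h, of 24] by simp_all
    ultimately have "Tstar n = (T^^4) n" unfolding Tstar_def by (simp only: if_True if_False simp_thms(6))
    also have "\<dots> = 9*(n div 48)+2" using c4[OF decomp[of n 48, unfolded h]] by (simp only:)
    finally show ?thesis using h by blast
  next
    assume h: "n mod 96 = 80"
    moreover have "n mod 6 \<noteq> 5" "n mod 12 \<noteq> 2" "n mod 24 \<noteq> 20" "n mod 48 \<noteq> 8"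
      using mmh[OF h, of 6] mmh[OF h, of 12] mmh[OF h, of 24] mmh[OF h, of 48] by simp_all
    ultimately have "Tstar n = (T^^5) n" unfolding Tstar_def by (simp only: if_True if_False simp_thms(6))
    also have "\<dots> = 9*(n div 96)+8" using c5[OF decomp[of n 96, unfolded h]] by (simp only:)
    finally show ?thesis using h by blast
  next
    assume h: "n mod 192 = 32"
    moreover have "n mod 6 \<noteq> 5" "n mod 12 \<noteq> 2" "n mod 24 \<noteq> 20" "n mod 48 \<noteq> 8" "n mod 96 \<noteq> 80"
      using mmh[OF h, of 6] mmh[OF h, of 12] mmh[OF h, of 24] mmh[OF h, of 48] mmh[OF h, of 96] by simp_all
    ultimately have "Tstar n = (T^^6) n" unfolding Tstar_def by (simp only: if_True if_False simp_thms(6))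
    also have "\<dots> = 9*(n div 192)+2" using c6[OF decomp[of n 192, unfolded h]] by (simp only:)
    finally show ?thesis using h by blast
  next
    assume h: "n mod 192 = 128"
    moreover have "n mod 6 \<noteq> 5" "n mod 12 \<noteq> 2" "n mod 24 \<noteq> 20" "n mod 48 \<noteq> 8" "n mod 96 \<noteq> 80" "n mod 192 \<noteq> 32"
      using h mmh[OF h, of 6] mmh[OF h, of 12] mmh[OF h, of 24] mmh[OF h, of 48] mmh[OF h, of 96] by simp_all
    ultimately have "Tstar n = (T^^6) n" unfolding Tstar_def by (simp only: if_True if_False simp_thms(6))
    also have "\<dots> = 3*(n div 192)+2" using c7[OF decomp[of n 192, unfolded h]] by (simp only:)
    finally show ?thesis using h by blast
  qed
qed

lemma m3: "(9*q+a) mod 3 = a mod (3::int)"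
proof -
  have "9*q+a = a + 3*(3*q)" by simp
  then show ?thesis by (metis mod_mult_self2)
qed

lemma into: "n \<in> cls23 \<Longrightarrow> Tstar n \<in> cls23"
  using cases23[of n] unfolding cls23_def by (auto simp: m3)

lemma Tstar7: assumes h: "n mod 192 = 128" shows "Tstar n = 3*(n div 192)+2"
proof -
  have "n mod 6 \<noteq> 5" "n mod 12 \<noteq> 2" "n mod 24 \<noteq> 20" "n mod 48 \<noteq> 8" "n mod 96 \<noteq> 80" "n mod 192 \<noteq> 32"
    using h mmh[OF h, of 6] mmh[OF h, of 12] mmh[OF h, of 24] mmh[OF h, of 48] mmh[OF h, of 96] by simp_all
  with h have "Tstar n = (T^^6) n" unfolding Tstar_def by (simp only: if_True if_False simp_thms(6))
  also have "\<dots> = 3*(n div 192)+2" using c7[OF decomp[of n 192, unfolded h]] by (simp only:)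
  finally show ?thesis .
qed

lemma onto: "cls23 \<subseteq> Tstar ` cls23"
proof
  fix x assume "x \<in> cls23"
  then have x: "x mod 3 = 2" by (simp add: cls23_def)
  define m where "m = x div 3"
  have xm: "x = 3*m+2" using x m_def decomp[of x 3] by simp
  define n where "n = 192*m+128"
  have h: "n mod 192 = 128" "n div 192 = m" unfolding n_def by simp_all
  then have "n mod 3 = 2" using mmh[of n 192 128 3] by simp
  have "Tstar n = x" using Tstar7[OF h(1)] h(2) xm by simp
  then show "x \<in> Tstar ` cls23" using \<open>n mod 3 = 2\<close> by (force simp: cls23_def)
qed

lemma m7: "(192*q+128) mod 9 = (3*q+2) mod (9::int)"
proof -
  have "192*q+128 = (3*q+2) + 9*(21*q+14)" by simp
  then show ?thesis by (metis mod_mult_self2 mult.commute)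
qed

lemma m7': "n mod 192 = 128 \<Longrightarrow> (3*(n div 192)+2) mod 9 = n mod (9::int)"
  using m7[of "n div 192"] decomp[of n 192] by simp

lemma a9: "(9*q+a) mod 9 = a mod (9::int)" by simp

lemma keep: "n \<in> cls23 \<Longrightarrow> n mod 9 \<noteq> 5 \<Longrightarrow> Tstar n mod 9 \<noteq> 5"
proof -
  assume a: "n \<in> cls23" "n mod 9 \<noteq> 5"
  from a have "n mod 3 = 2" by (simp add: cls23_def)
  from cases23[OF this] show ?thesis using m7'[of n] a(2) by (elim disjE) auto
qed

lemma drop5: "n \<in> cls23 \<Longrightarrow> n mod 9 = 5 \<Longrightarrow> Tstar n mod 9 = 5 \<Longrightarrow> nat \<bar>Tstar n\<bar> < nat \<bar>n\<bar>"
proof -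
  assume a: "n \<in> cls23" "n mod 9 = 5" "Tstar n mod 9 = 5"
  have h: "n mod 192 = 128 \<and> Tstar n = 3*(n div 192)+2"
  proof -
    from a have "n mod 3 = 2" by (simp add: cls23_def)
    from cases23[OF this] show ?thesis using a(3) by (elim disjE) auto
  qed
  define q where "q = n div 192"
  have "n = 192*q+128" using h decomp[of n 192] q_def by simp
  moreover have "Tstar n = 3*q+2" using h q_def by simp
  moreover have "\<bar>3*q+2\<bar> < \<bar>192*q+128\<bar>" by (cases "q \<ge> 0") (auto simp: abs_if)
  ultimately show ?thesis by simp
qed

lemma iter_cls: "n \<in> cls23 \<Longrightarrow> (Tstar^^k) n \<in> cls23"
  by (induction k) (auto intro: into)

lemma iter_keep: "n \<in> cls23 \<Longrightarrow> n mod 9 \<noteq> 5 \<Longrightarrow> (Tstar^^k) n mod 9 \<noteq> 5"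
  by (induction k) (simp_all add: keep iter_cls)

lemma reach: "n \<in> cls23 \<Longrightarrow> \<exists>K. (\<forall>k<K. (Tstar^^k) n mod 9 = 5) \<and> (Tstar^^K) n mod 9 \<noteq> 5"
proof (induction "nat \<bar>n\<bar>" arbitrary: n rule: less_induct)
  case less
  show ?case
  proof (cases "n mod 9 = 5")
    case False
    then show ?thesis by (intro exI[of _ 0]) auto
  next
    case True
    show ?thesis
    proof (cases "Tstar n mod 9 = 5")
      case False
      then show ?thesis using True by (intro exI[of _ 1]) auto
    next
      case T5: True
      have "nat \<bar>Tstar n\<bar> < nat \<bar>n\<bar>" using drop5 less.prems True T5 by blast
      then obtain K where K: "\<forall>k<K. (Tstar^^k) (Tstar n) mod 9 = 5" "(Tstar^^K) (Tstar n) mod 9 \<noteq> 5"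
        using less.hyps[OF _ into[OF less.prems]] by blast
      have "\<forall>k<Suc K. (Tstar^^k) n mod 9 = 5"
      proof (intro allI impI)
        fix k assume "k < Suc K"
        then show "(Tstar^^k) n mod 9 = 5" using K(1) True
          by (cases k) (auto simp: funpow_Suc_right simp del: funpow.simps)
      qed
      moreover have "(Tstar^^Suc K) n mod 9 \<noteq> 5" using K(2) by (simp add: funpow_Suc_right del: funpow.simps)
      ultimately show ?thesis by blast
    qed
  qed
qed

lemma mod9: "x \<in> cls23 \<Longrightarrow> x mod 9 \<noteq> 5 \<Longrightarrow> x mod 9 = 2 \<or> x mod 9 = 8"
proof -
  assume a: "x \<in> cls23" "x mod 9 \<noteq> 5"
  define r where "r = x mod 9"
  have r9: "x mod 9 = r" unfolding r_def by simp
  have x3: "x mod 3 = 2" using a(1) by (simp add: cls23_def)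
  have "r mod 3 = 2" using mmh[OF r9, of 3] x3 by simp
  moreover have "0 \<le> r" "r < 9" unfolding r_def by simp_all
  moreover have "r \<noteq> 5" using a(2) r9 by simp
  moreover have "\<forall>r\<in>{0..8::int}. r mod 3 = 2 \<longrightarrow> r \<noteq> 5 \<longrightarrow> r = 2 \<or> r = 8"
    unfolding set_upto[symmetric] by (simp add: upto.simps)
  ultimately show ?thesis using r9 by auto
qed

theorem theorem5:
  shows "Tstar ` cls23 = cls23 \<and>
         (\<forall>n \<in> cls23. \<exists>K::nat.
           (\<forall>k<K. (Tstar ^^ k) n mod 9 = 5) \<and>
           (\<forall>k\<ge>K. (Tstar ^^ k) n mod 9 = 2 \<or> (Tstar ^^ k) n mod 9 = 8))"
proof
  show "Tstar ` cls23 = cls23" using onto into by blast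
next
  show "\<forall>n \<in> cls23. \<exists>K::nat.
           (\<forall>k<K. (Tstar ^^ k) n mod 9 = 5) \<and>
           (\<forall>k\<ge>K. (Tstar ^^ k) n mod 9 = 2 \<or> (Tstar ^^ k) n mod 9 = 8)"
  proof
    fix n assume n: "n \<in> cls23"
    obtain K where K: "\<forall>k<K. (Tstar^^k) n mod 9 = 5" "(Tstar^^K) n mod 9 \<noteq> 5"
      using reach[OF n] by blast
    have "\<forall>k\<ge>K. (Tstar ^^ k) n mod 9 = 2 \<or> (Tstar ^^ k) n mod 9 = 8"
    proof (intro allI impI)
      fix k assume "K \<le> k"
      then obtain j where kj: "k = j + K" by (metis add.commute le_add_diff_inverse)
      have "(Tstar^^k) n = (Tstar^^j) ((Tstar^^K) n)" unfolding kj by (simp add: funpow_add)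
      moreover have "(Tstar^^j) ((Tstar^^K) n) mod 9 \<noteq> 5"
        using iter_keep[OF iter_cls[OF n] K(2)] .
      ultimately show "(Tstar ^^ k) n mod 9 = 2 \<or> (Tstar ^^ k) n mod 9 = 8"
        using mod9 iter_cls[OF n] by metis
    qed
    then show "\<exists>K::nat. (\<forall>k<K. (Tstar ^^ k) n mod 9 = 5) \<and>
           (\<forall>k\<ge>K. (Tstar ^^ k) n mod 9 = 2 \<or> (Tstar ^^ k) n mod 9 = 8)" using K by blast
  qed
qed
end
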